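(* Let $\mathbf{C}$ be a locally small category all of whose morphisms are monomorphisms, and let $\mathfrak{G} = (G_A)_{A \in \mathrm{Ob}(\mathbf{C})}$ be a family of groups with $G_A \le \mathrm{Aut}_\mathbf{C}(A)$ for all $A \in \mathrm{Ob}(\mathbf{C})$. If $\mathbf{C}$ has the $\mathfrak{G}$-Ramsey property, i.e. $t^\mathfrak{G}_\mathbf{C}(A) = 1$ for all $A \in \mathrm{Ob}(\mathbf{C})$, then $\mathrm{Aut}_\mathbf{C}(A) = G_A$ for all $A \in \mathrm{Ob}(\mathbf{C})$. In particular, if $\mathbf{C}$ has the embedding Ramsey property (the case $G_A = \{\mathrm{id}_A\}$ for all $A$), then every object of $\mathbf{C}$ is rigid, i.e. $\mathrm{Aut}_\mathbf{C}(A) = \{\mathrm{id}_A\}$.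
   Context: $\mathrm{Aut}_\mathbf{C}(A)$ is the group of invertible morphisms $A \to A$. For $f, g \in \hom(A,B)$ write $f \sim_\mathfrak{G} g$ if $f = g \cdot \alpha$ for some $\alpha \in G_A$; let $\binom{B}{A}_\mathfrak{G} = \hom(A,B)/{\sim_\mathfrak{G}} = \{f \cdot G_A : f \in \hom(A,B)\}$. For $w \in \hom(B,C)$ and a set $X$ of classes in $\binom{B}{A}_\mathfrak{G}$, $w \cdot X = \{(w\cdot f)/{\sim_\mathfrak{G}} : f/{\sim_\mathfrak{G}} \in X\}$. For $k,t \in \mathbb{N}$ and objects $A \to B \to C$ (meaning the homsets are nonempty), $C \overset{\mathfrak{G}}{\longrightarrow} (B)^A_{k,t}$ means: for every coloring $\chi : \binom{C}{A}_\mathfrak{G} \to k = \{0,\dots,k-1\}$ there is $w \in \hom(B,C)$ with $|\chi(w \cdot \binom{B}{A}_\mathfrak{G})| \le t$. The small $\mathfrak{G}$-Ramsey degree $t^\mathfrak{G}_\mathbf{C}(A)$ is the least positive integer $n$ such that for all $k \in \mathbb{N}$ and all $B \in \mathrm{Ob}(\mathbf{C})$ there is $C \in \mathrm{Ob}(\mathbf{C})$ with $C \overset{\mathfrak{G}}{\longrightarrow} (B)^A_{k,n}$; if no such $n$ exists, $t^\mathfrak{G}_\mathbf{C}(A) = \infty$. *)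

theory Defs
  imports Main
begin

text \<open>A (locally small) category with objects Ob, hom-sets hom A B, composition
  cmp g f (= g \<cdot> f, first f then g) and identities ident A.\<close>

definition category ::
  "'o set \<Rightarrow> ('o \<Rightarrow> 'o \<Rightarrow> 'm set) \<Rightarrow> ('m \<Rightarrow> 'm \<Rightarrow> 'm) \<Rightarrow> ('o \<Rightarrow> 'm) \<Rightarrow> bool" where
  "category Ob hom cmp ident \<longleftrightarrow>
     (\<forall>A\<in>Ob. ident A \<in> hom A A) \<and>
     (\<forall>A\<in>Ob. \<forall>B\<in>Ob. \<forall>C\<in>Ob. \<forall>f\<in>hom A B. \<forall>g\<in>hom B C. cmp g f \<in> hom A C) \<and>
     (\<forall>A\<in>Ob. \<forall>B\<in>Ob. \<forall>C\<in>Ob. \<forall>D\<in>Ob. \<forall>f\<in>hom A B. \<forall>g\<in>hom B C. \<forall>h\<in>hom C D.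
        cmp h (cmp g f) = cmp (cmp h g) f) \<and>
     (\<forall>A\<in>Ob. \<forall>B\<in>Ob. \<forall>f\<in>hom A B. cmp f (ident A) = f \<and> cmp (ident B) f = f)"

definition all_mono ::
  "'o set \<Rightarrow> ('o \<Rightarrow> 'o \<Rightarrow> 'm set) \<Rightarrow> ('m \<Rightarrow> 'm \<Rightarrow> 'm) \<Rightarrow> bool" where
  "all_mono Ob hom cmp \<longleftrightarrow>
     (\<forall>X\<in>Ob. \<forall>A\<in>Ob. \<forall>B\<in>Ob. \<forall>f\<in>hom A B. \<forall>g\<in>hom X A. \<forall>h\<in>hom X A.
        cmp f g = cmp f h \<longrightarrow> g = h)"

definition Aut ::
  "('o \<Rightarrow> 'o \<Rightarrow> 'm set) \<Rightarrow> ('m \<Rightarrow> 'm \<Rightarrow> 'm) \<Rightarrow> ('o \<Rightarrow> 'm) \<Rightarrow> 'o \<Rightarrow> 'm set" where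
  "Aut hom cmp ident A =
     {f \<in> hom A A. \<exists>g\<in>hom A A. cmp g f = ident A \<and> cmp f g = ident A}"

definition subgroup_Aut ::
  "('o \<Rightarrow> 'o \<Rightarrow> 'm set) \<Rightarrow> ('m \<Rightarrow> 'm \<Rightarrow> 'm) \<Rightarrow> ('o \<Rightarrow> 'm) \<Rightarrow> 'o \<Rightarrow> 'm set \<Rightarrow> bool" where
  "subgroup_Aut hom cmp ident A H \<longleftrightarrow>
     H \<subseteq> Aut hom cmp ident A \<and> ident A \<in> H \<and>
     (\<forall>a\<in>H. \<forall>b\<in>H. cmp a b \<in> H) \<and>
     (\<forall>a\<in>H. \<exists>b\<in>H. cmp b a = ident A \<and> cmp a b = ident A)"

definition gclass :: "('m \<Rightarrow> 'm \<Rightarrow> 'm) \<Rightarrow> ('o \<Rightarrow> 'm set) \<Rightarrow> 'o \<Rightarrow> 'm \<Rightarrow> 'm set" where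
  "gclass cmp G A f = {cmp f \<alpha> | \<alpha>. \<alpha> \<in> G A}"

definition gbinom ::
  "('o \<Rightarrow> 'o \<Rightarrow> 'm set) \<Rightarrow> ('m \<Rightarrow> 'm \<Rightarrow> 'm) \<Rightarrow> ('o \<Rightarrow> 'm set) \<Rightarrow> 'o \<Rightarrow> 'o \<Rightarrow> 'm set set" where
  "gbinom hom cmp G B A = gclass cmp G A ` hom A B"

definition gact ::
  "('o \<Rightarrow> 'o \<Rightarrow> 'm set) \<Rightarrow> ('m \<Rightarrow> 'm \<Rightarrow> 'm) \<Rightarrow> ('o \<Rightarrow> 'm set) \<Rightarrow> 'o \<Rightarrow> 'o \<Rightarrow> 'm \<Rightarrow> 'm set set \<Rightarrow> 'm set set" where
  "gact hom cmp G A B w X =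
     {gclass cmp G A (cmp w f) | f. f \<in> hom A B \<and> gclass cmp G A f \<in> X}"

definition gramsey_arrow ::
  "('o \<Rightarrow> 'o \<Rightarrow> 'm set) \<Rightarrow> ('m \<Rightarrow> 'm \<Rightarrow> 'm) \<Rightarrow> ('o \<Rightarrow> 'm set) \<Rightarrow> 'o \<Rightarrow> 'o \<Rightarrow> 'o \<Rightarrow> nat \<Rightarrow> nat \<Rightarrow> bool" where
  "gramsey_arrow hom cmp G C B A k t \<longleftrightarrow>
     hom A B \<noteq> {} \<and> hom B C \<noteq> {} \<and>
     (\<forall>\<chi> :: 'm set \<Rightarrow> nat. \<chi> ` gbinom hom cmp G C A \<subseteq> {..<k} \<longrightarrow>
        (\<exists>w\<in>hom B C. card (\<chi> ` gact hom cmp G A B w (gbinom hom cmp G B A)) \<le> t))"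

definition gramsey_degree_le ::
  "'o set \<Rightarrow> ('o \<Rightarrow> 'o \<Rightarrow> 'm set) \<Rightarrow> ('m \<Rightarrow> 'm \<Rightarrow> 'm) \<Rightarrow> ('o \<Rightarrow> 'm set) \<Rightarrow> 'o \<Rightarrow> nat \<Rightarrow> bool" where
  "gramsey_degree_le Ob hom cmp G A n \<longleftrightarrow>
     (\<forall>k::nat. \<forall>B\<in>Ob. hom A B \<noteq> {} \<longrightarrow>
        (\<exists>C\<in>Ob. gramsey_arrow hom cmp G C B A k n))"

text \<open>Small G-Ramsey degree t^G_C(A) as an extended natural: least positive n, else \<infinity>
  (represented as None).\<close>
definition gramsey_degree ::
  "'o set \<Rightarrow> ('o \<Rightarrow> 'o \<Rightarrow> 'm set) \<Rightarrow> ('m \<Rightarrow> 'm \<Rightarrow> 'm) \<Rightarrow> ('o \<Rightarrow> 'm set) \<Rightarrow> 'o \<Rightarrow> nat option" where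
  "gramsey_degree Ob hom cmp G A =
     (if \<exists>n>0. gramsey_degree_le Ob hom cmp G A n
      then Some (LEAST n. n > 0 \<and> gramsey_degree_le Ob hom cmp G A n) else None)"

end

theory Submission
  imports Defs
begin

theorem proposition3p2:
  fixes Ob :: "'o set" and hom :: "'o \<Rightarrow> 'o \<Rightarrow> 'm set"
    and cmp :: "'m \<Rightarrow> 'm \<Rightarrow> 'm" and ident :: "'o \<Rightarrow> 'm"
    and G :: "'o \<Rightarrow> 'm set"
  assumes "category Ob hom cmp ident"
    and "all_mono Ob hom cmp"
    and "\<forall>A\<in>Ob. subgroup_Aut hom cmp ident A (G A)"
    and "\<forall>A\<in>Ob. gramsey_degree Ob hom cmp G A = Some 1"
  shows "\<forall>A\<in>Ob. Aut hom cmp ident A = G A"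
proof
  fix A assume A: "A \<in> Ob"
  have idh: "\<And>X. X \<in> Ob \<Longrightarrow> ident X \<in> hom X X"
    and comp: "\<And>X Y Z f g. X \<in> Ob \<Longrightarrow> Y \<in> Ob \<Longrightarrow> Z \<in> Ob \<Longrightarrow> f \<in> hom X Y \<Longrightarrow> g \<in> hom Y Z \<Longrightarrow> cmp g f \<in> hom X Z"
    and assoc: "\<And>X Y Z W f g h. X \<in> Ob \<Longrightarrow> Y \<in> Ob \<Longrightarrow> Z \<in> Ob \<Longrightarrow> W \<in> Ob \<Longrightarrow> f \<in> hom X Y \<Longrightarrow> g \<in> hom Y Z \<Longrightarrow> h \<in> hom Z W \<Longrightarrow> cmp h (cmp g f) = cmp (cmp h g) f"
    and idr: "\<And>X Y f. X \<in> Ob \<Longrightarrow> Y \<in> Ob \<Longrightarrow> f \<in> hom X Y \<Longrightarrow> cmp f (ident X) = f"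
    and idl: "\<And>X Y f. X \<in> Ob \<Longrightarrow> Y \<in> Ob \<Longrightarrow> f \<in> hom X Y \<Longrightarrow> cmp (ident Y) f = f"
    using assms(1) unfolding category_def by blast+
  have mono: "\<And>X Y Z f g h. X \<in> Ob \<Longrightarrow> Y \<in> Ob \<Longrightarrow> Z \<in> Ob \<Longrightarrow> f \<in> hom Y Z \<Longrightarrow> g \<in> hom X Y \<Longrightarrow> h \<in> hom X Y \<Longrightarrow> cmp f g = cmp f h \<Longrightarrow> g = h"
    using assms(2) unfolding all_mono_def by blast
  have sg: "subgroup_Aut hom cmp ident A (G A)" using assms(3) A by blast
  define H where "H = Aut hom cmp ident A"
  have GH: "G A \<subseteq> H" using sg unfolding subgroup_Aut_def H_def by blast
  have Ghom: "\<And>a. a \<in> G A \<Longrightarrow> a \<in> hom A A" using GH unfolding H_def Aut_def by blast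
  have Ginv: "\<And>a. a \<in> G A \<Longrightarrow> \<exists>b\<in>G A. cmp b a = ident A \<and> cmp a b = ident A"
    using sg unfolding subgroup_Aut_def by blast
  have identG: "ident A \<in> G A" using sg unfolding subgroup_Aut_def by blast
  have Hhom: "\<And>a. a \<in> H \<Longrightarrow> a \<in> hom A A" unfolding H_def Aut_def by blast
  have Hinv: "\<And>a. a \<in> H \<Longrightarrow> \<exists>b\<in>H. cmp b a = ident A \<and> cmp a b = ident A"
  proof -
    fix a assume "a \<in> H"
    then obtain b where b: "b \<in> hom A A" "cmp b a = ident A" "cmp a b = ident A"
      unfolding H_def Aut_def by blast
    have "b \<in> H" unfolding H_def Aut_def using b \<open>a \<in> H\<close> Hhom by blast
    then show "\<exists>b\<in>H. cmp b a = ident A \<and> cmp a b = ident A" using b by blast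
  qed
  have Hcomp: "\<And>a b. a \<in> H \<Longrightarrow> b \<in> H \<Longrightarrow> cmp a b \<in> H"
  proof -
    fix a b assume a: "a \<in> H" and b: "b \<in> H"
    obtain a' where a': "a' \<in> H" "cmp a' a = ident A" "cmp a a' = ident A" using Hinv a by blast
    obtain b' where b': "b' \<in> H" "cmp b' b = ident A" "cmp b b' = ident A" using Hinv b by blast
    have ha: "a \<in> hom A A" "a' \<in> hom A A" "b \<in> hom A A" "b' \<in> hom A A"
      using a a' b b' Hhom by auto
    have c: "cmp a b \<in> hom A A" "cmp b' a' \<in> hom A A" using comp A ha by auto
    have "cmp (cmp b' a') (cmp a b) = cmp b' (cmp (cmp a' a) b)"
      using assoc A ha c by metis
    also have "\<dots> = ident A" using a' b' idl A ha by simp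
    finally have e1: "cmp (cmp b' a') (cmp a b) = ident A" .
    have "cmp (cmp a b) (cmp b' a') = cmp a (cmp (cmp b b') a')"
      using assoc A ha c by metis
    also have "\<dots> = ident A" using a' b' idl A ha by simp
    finally have e2: "cmp (cmp a b) (cmp b' a') = ident A" .
    show "cmp a b \<in> H" unfolding H_def Aut_def using c e1 e2 by blast
  qed
  have identH: "ident A \<in> H" using identG GH by blast
  show "Aut hom cmp ident A = G A"
  proof
    show "G A \<subseteq> Aut hom cmp ident A" using GH H_def by simp
  next
    show "Aut hom cmp ident A \<subseteq> G A"
    proof
      fix \<alpha> assume aA: "\<alpha> \<in> Aut hom cmp ident A"
      then have aH: "\<alpha> \<in> H" using H_def by simp
      show "\<alpha> \<in> G A"
      proof (rule ccontr)
        assume nG: "\<alpha> \<notin> G A"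
        have "gramsey_degree Ob hom cmp G A = Some 1" using assms(4) A by blast
        then have ex: "\<exists>n>0. gramsey_degree_le Ob hom cmp G A n"
          and L: "(LEAST n. n > 0 \<and> gramsey_degree_le Ob hom cmp G A n) = 1"
          unfolding gramsey_degree_def by (auto split: if_splits)
        then have le: "gramsey_degree_le Ob hom cmp G A 1"
          using LeastI_ex[of "\<lambda>n. n > 0 \<and> gramsey_degree_le Ob hom cmp G A n"] by auto
        have idA: "ident A \<in> hom A A" using idh A by blast
        obtain C where C: "C \<in> Ob" and arr: "gramsey_arrow hom cmp G C A A 2 1"
          using le A idA unfolding gramsey_degree_le_def by blast
        define Hc where "Hc g = {cmp g \<beta> | \<beta>. \<beta> \<in> H}" for g
        define \<chi> where "\<chi> X = (if \<exists>g\<in>X. g = (SOME h. h \<in> Hc g) then 0::nat else 1)" for X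
        have "\<chi> ` gbinom hom cmp G C A \<subseteq> {..<2}" by (auto simp: \<chi>_def)
        then obtain w where w: "w \<in> hom A C"
          and card: "card (\<chi> ` gact hom cmp G A A w (gbinom hom cmp G A A)) \<le> 1"
          using arr unfolding gramsey_arrow_def by blast
        have HHc: "Hc (cmp w \<gamma>) = Hc w" if g: "\<gamma> \<in> H" for \<gamma>
        proof
          show "Hc (cmp w \<gamma>) \<subseteq> Hc w"
          proof
            fix x assume "x \<in> Hc (cmp w \<gamma>)"
            then obtain \<beta> where "\<beta> \<in> H" "x = cmp (cmp w \<gamma>) \<beta>" unfolding Hc_def by blast
            then have "x = cmp w (cmp \<gamma> \<beta>)" using assoc[of A A A C \<beta> \<gamma> w] A C w Hhom g by auto
            then show "x \<in> Hc w" unfolding Hc_def using Hcomp g \<open>\<beta> \<in> H\<close> by blast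
          qed
        next
          show "Hc w \<subseteq> Hc (cmp w \<gamma>)"
          proof
            fix x assume "x \<in> Hc w"
            then obtain \<beta> where b: "\<beta> \<in> H" "x = cmp w \<beta>" unfolding Hc_def by blast
            obtain \<gamma>' where g': "\<gamma>' \<in> H" "cmp \<gamma> \<gamma>' = ident A" using Hinv g by blast
            have "cmp (cmp w \<gamma>) (cmp \<gamma>' \<beta>) = cmp w (cmp (cmp \<gamma> \<gamma>') \<beta>)"
            proof -
              have h1: "\<gamma>' \<in> hom A A" "\<beta> \<in> hom A A" "\<gamma> \<in> hom A A" using g' b g Hhom by auto
              have h2: "cmp \<gamma>' \<beta> \<in> hom A A" using comp[OF A A A h1(2) h1(1)] .
              have "cmp (cmp w \<gamma>) (cmp \<gamma>' \<beta>) = cmp w (cmp \<gamma> (cmp \<gamma>' \<beta>))"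
                using assoc[OF A A A C h2 h1(3) w] by simp
              also have "\<dots> = cmp w (cmp (cmp \<gamma> \<gamma>') \<beta>)"
                using assoc[OF A A A A h1(2) h1(1) h1(3)] by simp
              finally show ?thesis .
            qed
            also have "\<dots> = x" using g' b idl A Hhom by simp
            finally show "x \<in> Hc (cmp w \<gamma>)" unfolding Hc_def using Hcomp g' b by blast
          qed
        qed
        define f0 where "f0 = (SOME h. h \<in> Hc w)"
        have "cmp w (ident A) \<in> Hc w" unfolding Hc_def using identH by blast
        then have "w \<in> Hc w" using idr[OF A C w] by simp
        then have "f0 \<in> Hc w" unfolding f0_def by (rule someI)
        then obtain \<gamma> where g: "\<gamma> \<in> H" "f0 = cmp w \<gamma>" unfolding Hc_def by blast
        have gh: "\<gamma> \<in> hom A A" using g Hhom by blast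
        have ah: "\<alpha> \<in> hom A A" using aH Hhom by blast
        have gah: "cmp \<gamma> \<alpha> \<in> hom A A" using comp A gh ah by blast
        have inb: "gclass cmp G A (cmp w f) \<in> gact hom cmp G A A w (gbinom hom cmp G A A)"
          if "f \<in> hom A A" for f
          using that unfolding gact_def gbinom_def by blast
        have c0: "\<chi> (gclass cmp G A (cmp w \<gamma>)) = 0"
        proof -
          have wg: "cmp w \<gamma> \<in> hom A C" using comp[OF A A C gh w] .
          have "cmp (cmp w \<gamma>) (ident A) \<in> gclass cmp G A (cmp w \<gamma>)"
            unfolding gclass_def using identG by blast
          then have "cmp w \<gamma> \<in> gclass cmp G A (cmp w \<gamma>)" using idr[OF A C wg] by simp
          moreover have "cmp w \<gamma> = (SOME h. h \<in> Hc (cmp w \<gamma>))"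
            using HHc g f0_def by simp
          ultimately show ?thesis unfolding \<chi>_def by auto
        qed
        have c1: "\<chi> (gclass cmp G A (cmp w (cmp \<gamma> \<alpha>))) = 1"
        proof (rule ccontr)
          assume "\<chi> (gclass cmp G A (cmp w (cmp \<gamma> \<alpha>))) \<noteq> 1"
          then obtain x where x: "x \<in> gclass cmp G A (cmp w (cmp \<gamma> \<alpha>))"
            "x = (SOME h. h \<in> Hc x)" unfolding \<chi>_def by (auto split: if_splits)
          then obtain \<delta> where d: "\<delta> \<in> G A" "x = cmp (cmp w (cmp \<gamma> \<alpha>)) \<delta>"
            unfolding gclass_def by blast
          have dh: "\<delta> \<in> hom A A" using d Ghom by blast
          have x2: "x = cmp w (cmp (cmp \<gamma> \<alpha>) \<delta>)"
            using d(2) assoc[of A A A C \<delta> "cmp \<gamma> \<alpha>" w] A C w gah dh by simp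
          have gadH: "cmp (cmp \<gamma> \<alpha>) \<delta> \<in> H" using Hcomp g aH d GH by blast
          have "Hc x = Hc w" using x2 HHc gadH by simp
          then have "x = f0" using x(2) f0_def by simp
          then have "cmp w (cmp (cmp \<gamma> \<alpha>) \<delta>) = cmp w \<gamma>" using x2 g by simp
          then have e1: "cmp (cmp \<gamma> \<alpha>) \<delta> = \<gamma>"
            using mono[of A A C w "cmp (cmp \<gamma> \<alpha>) \<delta>" \<gamma>] A C w gh gadH Hhom by blast
          have adh: "cmp \<alpha> \<delta> \<in> hom A A" using comp A ah dh by blast
          have "cmp \<gamma> (cmp \<alpha> \<delta>) = cmp \<gamma> (ident A)"
            using e1 assoc[of A A A A \<delta> \<alpha> \<gamma>] A ah dh gh idr by simp
          then have e2: "cmp \<alpha> \<delta> = ident A"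
            using mono[of A A A \<gamma> "cmp \<alpha> \<delta>" "ident A"] A gh adh idA by blast
          obtain \<delta>' where d': "\<delta>' \<in> G A" "cmp \<delta> \<delta>' = ident A" using Ginv d by blast
          have "\<alpha> = cmp \<alpha> (cmp \<delta> \<delta>')" using d' idr A ah by simp
          also have "\<dots> = cmp (cmp \<alpha> \<delta>) \<delta>'" using assoc[OF A A A A Ghom[OF d'(1)] dh ah] by simp
          also have "\<dots> = \<delta>'" using e2 idl A Ghom d' by simp
          finally show False using nG d' by simp
        qed
        have "{0,1} \<subseteq> \<chi> ` gact hom cmp G A A w (gbinom hom cmp G A A)"
          using c0 c1 inb[OF gh] inb[OF gah] by (metis image_eqI empty_subsetI insert_subset)
        moreover have "\<chi> ` gact hom cmp G A A w (gbinom hom cmp G A A) \<subseteq> {0,1}"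
          by (auto simp: \<chi>_def)
        ultimately have "\<chi> ` gact hom cmp G A A w (gbinom hom cmp G A A) = {0,1}" by blast
        then show False using card by simp
      qed
    qed
  qed
qed

end
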